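(* Let $Z_\pm,Y_\pm,R_0,R_1,f_{20},f_{10}$ be real numbers with $f_{20}\ne1$, $Z_-\le Z_+$, $Y_-\le Y_+$, and $0\le f_{20}(R_1-R_0)$ if $f_{20}\ne0$, resp. $0\le -f_{10}$ if $f_{20}=0$. Define $p_Z(x):=(x-Z_+)(x-Z_-)$, $p_Y(x):=(1-f_{20})(x-Y_+)(x-Y_-)$, and $p_R(x):=f_{20}(x-R_0)(x-R_1)$ if $f_{20}\ne0$, $p_R(x):=f_{10}(x-R_0)$ if $f_{20}=0$. (i) $p_Z-p_Y=p_R$ if and only if $Z_+Z_-+(f_{20}-1)Y_+Y_-$ equals $f_{20}R_0R_1$ (if $f_{20}\ne0$) resp. $-f_{10}R_0$ (if $f_{20}=0$), and $(Z_++Z_-)+(f_{20}-1)(Y_++Y_-)$ equals $f_{20}(R_0+R_1)$ (if $f_{20}\ne0$) resp. $-f_{10}$ (if $f_{20}=0$). (ii) If $p_Z-p_Y=p_R$ and $Y_-\le Z_-\le Y_+$ and $Y_-\le R_0\le Y_+$, then one of the following scenarios occurs, and within each scenario the four listed conditions (a),(b),(c),(d) are equivalent for the given range of $f_{20}$: 1a ($f_{20}=0$): (a) $Y_\pm=Z_\pm$; (b) $p_R\equiv0$; (c) $p_R\equiv0$; (d) $Y_\pm=Z_\pm$ and $p_R\equiv0$. 1b ($f_{20}=0$): (a) $Y_-\le Z_-\le Y_+\le Z_+$ and ($Y_+<Z_+$ or $Y_-<Z_-$); (b) $Y_-\le R_0\le Y_+$ and $f_{10}<0$; (c) $Z_-\le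 R_0\le Z_+$ and $f_{10}<0$; (d) $Y_-\le Z_-\le R_0\le Y_+\le Z_+$ and $f_{10}<0$. 2 ($f_{20}<0$): (a) $Y_-\le Z_-\le Y_+\le Z_+$; (b) $R_1\le Y_-\le R_0\le Y_+$; (c) $R_1\le Z_-\le R_0\le Z_+$; (d) $R_1\le Y_-\le Z_-\le R_0\le Y_+\le Z_+$. 3a ($0<f_{20}<1$): (a) $Y_-\le Z_-\le Y_+\le Z_+$; (b) $Y_-\le R_0\le Y_+\le R_1$; (c) $Z_-\le R_0\le Z_+\le R_1$; (d) $Y_-\le Z_-\le R_0\le Y_+\le Z_+\le R_1$. 3b ($f_{20}>1$): (a) $Y_-\le Z_-\le Y_+\le Z_+$; (b) $Y_-\le R_0\le Y_+\le R_1$; (c) $R_0\le Z_-\le R_1\le Z_+$; (d) $Y_-\le R_0\le Z_-\le Y_+\le R_1\le Z_+$. 4a ($0<f_{20}<1$): (a) $Y_-\le Z_-\le Z_+<Y_+$; (b) $Y_-\le R_0\le R_1<Y_+$; (c) $Z_-\le R_0\le R_1<Z_+$; (d) $Y_-\le Z_-\le R_0\le R_1<Z_+<Y_+$. 4b ($f_{20}>1$): (a) $Y_-\le Z_-\le Z_+<Y_+$; (b) $Y_-\le R_0\le R_1<Y_+$; (c) $R_0\le Z_-\le Z_+<R_1$; (d) $Y_-\le R_0\le Z_-\le Z_+<R_1<Y_+$.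
   Context: When $f_{20}=0$ the number $R_1$ plays no role. The scenarios are mutually disjoint. *)

theory Defs
  imports Main "HOL.Real"
begin

definition pZ :: "real \<Rightarrow> real \<Rightarrow> real \<Rightarrow> real" where
  "pZ Zp Zm x = (x - Zp) * (x - Zm)"

definition pY :: "real \<Rightarrow> real \<Rightarrow> real \<Rightarrow> real \<Rightarrow> real" where
  "pY f20 Yp Ym x = (1 - f20) * (x - Yp) * (x - Ym)"

definition pR :: "real \<Rightarrow> real \<Rightarrow> real \<Rightarrow> real \<Rightarrow> real \<Rightarrow> real" where
  "pR f20 f10 R0 R1 x = (if f20 \<noteq> 0 then f20 * (x - R0) * (x - R1) else f10 * (x - R0))"

datatype scenario = S1a | S1b | S2 | S3a | S3b | S4a | S4b

fun scen_range :: "scenario \<Rightarrow> real \<Rightarrow> bool" where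
  "scen_range S1a f20 = (f20 = 0)"
| "scen_range S1b f20 = (f20 = 0)"
| "scen_range S2 f20 = (f20 < 0)"
| "scen_range S3a f20 = (0 < f20 \<and> f20 < 1)"
| "scen_range S3b f20 = (f20 > 1)"
| "scen_range S4a f20 = (0 < f20 \<and> f20 < 1)"
| "scen_range S4b f20 = (f20 > 1)"

fun cond_a :: "scenario \<Rightarrow> real \<Rightarrow> real \<Rightarrow> real \<Rightarrow> real \<Rightarrow> bool" where
  "cond_a S1a Zp Zm Yp Ym = (Yp = Zp \<and> Ym = Zm)"
| "cond_a S1b Zp Zm Yp Ym = (Ym \<le> Zm \<and> Zm \<le> Yp \<and> Yp \<le> Zp \<and> (Yp < Zp \<or> Ym < Zm))"
| "cond_a S2 Zp Zm Yp Ym = (Ym \<le> Zm \<and> Zm \<le> Yp \<and> Yp \<le> Zp)"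
| "cond_a S3a Zp Zm Yp Ym = (Ym \<le> Zm \<and> Zm \<le> Yp \<and> Yp \<le> Zp)"
| "cond_a S3b Zp Zm Yp Ym = (Ym \<le> Zm \<and> Zm \<le> Yp \<and> Yp \<le> Zp)"
| "cond_a S4a Zp Zm Yp Ym = (Ym \<le> Zm \<and> Zm \<le> Zp \<and> Zp < Yp)"
| "cond_a S4b Zp Zm Yp Ym = (Ym \<le> Zm \<and> Zm \<le> Zp \<and> Zp < Yp)"

fun cond_b :: "scenario \<Rightarrow> real \<Rightarrow> real \<Rightarrow> real \<Rightarrow> real \<Rightarrow> real \<Rightarrow> real \<Rightarrow> bool" where
  "cond_b S1a f20 f10 Yp Ym R0 R1 = (pR f20 f10 R0 R1 = (\<lambda>x. 0))"
| "cond_b S1b f20 f10 Yp Ym R0 R1 = (Ym \<le> R0 \<and> R0 \<le> Yp \<and> f10 < 0)"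
| "cond_b S2 f20 f10 Yp Ym R0 R1 = (R1 \<le> Ym \<and> Ym \<le> R0 \<and> R0 \<le> Yp)"
| "cond_b S3a f20 f10 Yp Ym R0 R1 = (Ym \<le> R0 \<and> R0 \<le> Yp \<and> Yp \<le> R1)"
| "cond_b S3b f20 f10 Yp Ym R0 R1 = (Ym \<le> R0 \<and> R0 \<le> Yp \<and> Yp \<le> R1)"
| "cond_b S4a f20 f10 Yp Ym R0 R1 = (Ym \<le> R0 \<and> R0 \<le> R1 \<and> R1 < Yp)"
| "cond_b S4b f20 f10 Yp Ym R0 R1 = (Ym \<le> R0 \<and> R0 \<le> R1 \<and> R1 < Yp)"

fun cond_c :: "scenario \<Rightarrow> real \<Rightarrow> real \<Rightarrow> real \<Rightarrow> real \<Rightarrow> real \<Rightarrow> real \<Rightarrow> bool" where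
  "cond_c S1a f20 f10 Zp Zm R0 R1 = (pR f20 f10 R0 R1 = (\<lambda>x. 0))"
| "cond_c S1b f20 f10 Zp Zm R0 R1 = (Zm \<le> R0 \<and> R0 \<le> Zp \<and> f10 < 0)"
| "cond_c S2 f20 f10 Zp Zm R0 R1 = (R1 \<le> Zm \<and> Zm \<le> R0 \<and> R0 \<le> Zp)"
| "cond_c S3a f20 f10 Zp Zm R0 R1 = (Zm \<le> R0 \<and> R0 \<le> Zp \<and> Zp \<le> R1)"
| "cond_c S3b f20 f10 Zp Zm R0 R1 = (R0 \<le> Zm \<and> Zm \<le> R1 \<and> R1 \<le> Zp)"
| "cond_c S4a f20 f10 Zp Zm R0 R1 = (Zm \<le> R0 \<and> R0 \<le> R1 \<and> R1 < Zp)"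
| "cond_c S4b f20 f10 Zp Zm R0 R1 = (R0 \<le> Zm \<and> Zm \<le> Zp \<and> Zp < R1)"

fun cond_d :: "scenario \<Rightarrow> real \<Rightarrow> real \<Rightarrow> real \<Rightarrow> real \<Rightarrow> real \<Rightarrow> real \<Rightarrow> real \<Rightarrow> real \<Rightarrow> bool" where
  "cond_d S1a f20 f10 Zp Zm Yp Ym R0 R1 =
     (Yp = Zp \<and> Ym = Zm \<and> pR f20 f10 R0 R1 = (\<lambda>x. 0))"
| "cond_d S1b f20 f10 Zp Zm Yp Ym R0 R1 =
     (Ym \<le> Zm \<and> Zm \<le> R0 \<and> R0 \<le> Yp \<and> Yp \<le> Zp \<and> f10 < 0)"
| "cond_d S2 f20 f10 Zp Zm Yp Ym R0 R1 =
     (R1 \<le> Ym \<and> Ym \<le> Zm \<and> Zm \<le> R0 \<and> R0 \<le> Yp \<and> Yp \<le> Zp)"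
| "cond_d S3a f20 f10 Zp Zm Yp Ym R0 R1 =
     (Ym \<le> Zm \<and> Zm \<le> R0 \<and> R0 \<le> Yp \<and> Yp \<le> Zp \<and> Zp \<le> R1)"
| "cond_d S3b f20 f10 Zp Zm Yp Ym R0 R1 =
     (Ym \<le> R0 \<and> R0 \<le> Zm \<and> Zm \<le> Yp \<and> Yp \<le> R1 \<and> R1 \<le> Zp)"
| "cond_d S4a f20 f10 Zp Zm Yp Ym R0 R1 =
     (Ym \<le> Zm \<and> Zm \<le> R0 \<and> R0 \<le> R1 \<and> R1 < Zp \<and> Zp < Yp)"
| "cond_d S4b f20 f10 Zp Zm Yp Ym R0 R1 =
     (Ym \<le> R0 \<and> R0 \<le> Zm \<and> Zm \<le> Zp \<and> Zp < R1 \<and> R1 < Yp)"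

end

theory Submission
  imports Defs
begin

lemma part1:
  fixes Zp Zm Yp Ym R0 R1 f20 f10 :: real
  shows "(\<lambda>x. pZ Zp Zm x - pY f20 Yp Ym x) = pR f20 f10 R0 R1 \<longleftrightarrow>
        (Zp * Zm + (f20 - 1) * Yp * Ym = (if f20 \<noteq> 0 then f20 * R0 * R1 else - f10 * R0) \<and>
         (Zp + Zm) + (f20 - 1) * (Yp + Ym) = (if f20 \<noteq> 0 then f20 * (R0 + R1) else - f10))"
proof
  assume h: "(\<lambda>x. pZ Zp Zm x - pY f20 Yp Ym x) = pR f20 f10 R0 R1"
  have h0: "pZ Zp Zm 0 - pY f20 Yp Ym 0 = pR f20 f10 R0 R1 0" using h by metis
  have h1: "pZ Zp Zm 1 - pY f20 Yp Ym 1 = pR f20 f10 R0 R1 1" using h by metis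
  show "(Zp * Zm + (f20 - 1) * Yp * Ym = (if f20 \<noteq> 0 then f20 * R0 * R1 else - f10 * R0) \<and>
         (Zp + Zm) + (f20 - 1) * (Yp + Ym) = (if f20 \<noteq> 0 then f20 * (R0 + R1) else - f10))"
  proof (cases "f20 = 0")
    case True
    then show ?thesis using h0 h1 by (simp add: pZ_def pY_def pR_def algebra_simps)
  next
    case False
    then show ?thesis using h0 h1 by (simp add: pZ_def pY_def pR_def algebra_simps)
  qed
next
  assume h: "(Zp * Zm + (f20 - 1) * Yp * Ym = (if f20 \<noteq> 0 then f20 * R0 * R1 else - f10 * R0) \<and>
         (Zp + Zm) + (f20 - 1) * (Yp + Ym) = (if f20 \<noteq> 0 then f20 * (R0 + R1) else - f10))"
  show "(\<lambda>x. pZ Zp Zm x - pY f20 Yp Ym x) = pR f20 f10 R0 R1"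
  proof
    fix x
    show "pZ Zp Zm x - pY f20 Yp Ym x = pR f20 f10 R0 R1 x"
    proof (cases "f20 = 0")
      case True
      then have a: "Zp * Zm - Yp * Ym = - f10 * R0" "(Zp + Zm) - (Yp + Ym) = - f10" using h by auto
      have "pZ Zp Zm x - pY f20 Yp Ym x = x*x - (Zp+Zm)*x + Zp*Zm - (x*x - (Yp+Ym)*x + Yp*Ym)"
        using True by (simp add: pZ_def pY_def algebra_simps)
      also have "\<dots> = - ((Zp + Zm) - (Yp + Ym)) * x + (Zp * Zm - Yp * Ym)" by (simp add: algebra_simps)
      also have "\<dots> = pR f20 f10 R0 R1 x" unfolding a using True by (simp add: pR_def algebra_simps)
      finally show ?thesis .
    next
      case False
      then have a: "Zp * Zm + (f20 - 1) * Yp * Ym = f20 * R0 * R1" "(Zp + Zm) + (f20 - 1) * (Yp + Ym) = f20 * (R0 + R1)" using h by auto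
      have "pZ Zp Zm x - pY f20 Yp Ym x = f20*x*x - ((Zp + Zm) + (f20 - 1) * (Yp + Ym)) * x + (Zp * Zm + (f20 - 1) * Yp * Ym)"
        by (simp add: pZ_def pY_def algebra_simps)
      also have "\<dots> = pR f20 f10 R0 R1 x" unfolding a using False by (simp add: pR_def algebra_simps)
      finally show ?thesis .
    qed
  qed
qed

lemma neg_case:
  fixes Zp Zm Yp Ym R0 R1 f :: real
  assumes f: "f < 0" and r: "R1 \<le> R0" and o: "Ym \<le> Zm" "Zm \<le> Yp" "Ym \<le> R0" "R0 \<le> Yp" "Zm \<le> Zp"
    and H: "\<And>x. (x-Zp)*(x-Zm) - (1-f)*(x-Yp)*(x-Ym) = f*(x-R0)*(x-R1)"
  shows "Yp \<le> Zp \<and> R1 \<le> Ym \<and> Zm \<le> R0 \<and> R0 \<le> Zp"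
proof -
  have a: "(Yp-Zp)*(Yp-Zm) = f*((Yp-R0)*(Yp-R1))" using H[of Yp] by (simp add: algebra_simps)
  have "f*((Yp-R0)*(Yp-R1)) \<le> 0" using f r o by (intro mult_nonpos_nonneg) auto
  then have 1: "Yp \<le> Zp"
  proof -
    { assume "Yp > Zp" then have "(Yp-Zp)*(Yp-Zm) > 0" using o by (intro mult_pos_pos) auto }
    then show ?thesis using a `f*((Yp-R0)*(Yp-R1)) \<le> 0` by force
  qed
  have b: "(Ym-Zp)*(Ym-Zm) = f*((Ym-R0)*(Ym-R1))" using H[of Ym] by (simp add: algebra_simps)
  have "(Ym-Zp)*(Ym-Zm) \<ge> 0" using o by (intro mult_nonpos_nonpos) auto
  have 2: "R1 \<le> Ym"
  proof (rule ccontr)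
    assume "\<not> R1 \<le> Ym"
    then have "(Ym-R0)*(Ym-R1) > 0" using r by (intro mult_neg_neg) auto
    then have "f*((Ym-R0)*(Ym-R1)) < 0" using f by (simp add: mult_neg_pos)
    then show False using b `(Ym-Zp)*(Ym-Zm) \<ge> 0` by linarith
  qed
  have c: "(R0-Zp)*(R0-Zm) = (1-f)*((R0-Yp)*(R0-Ym))" using H[of R0] by (simp add: algebra_simps)
  have "(1-f)*((R0-Yp)*(R0-Ym)) \<le> 0" using f o by (intro mult_nonneg_nonpos mult_nonpos_nonneg) auto
  have 3: "Zm \<le> R0 \<and> R0 \<le> Zp"
  proof (rule ccontr)
    assume "\<not> (Zm \<le> R0 \<and> R0 \<le> Zp)"
    then have "(R0-Zp)*(R0-Zm) > 0" using o
      by (auto intro: mult_pos_pos mult_neg_neg)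
    then show False using c `(1-f)*((R0-Yp)*(R0-Ym)) \<le> 0` by linarith
  qed
  show ?thesis using 1 2 3 by auto
qed

lemma pos_common:
  fixes Zp Zm Yp Ym R0 R1 f :: real
  assumes f: "0 < f" and r: "R0 \<le> R1" and o: "Ym \<le> Zm" "Zm \<le> Yp" "Ym \<le> R0" "R0 \<le> Yp" "Zm \<le> Zp"
    and H: "\<And>x. (x-Zp)*(x-Zm) - (1-f)*(x-Yp)*(x-Ym) = f*(x-R0)*(x-R1)"
  shows "Yp \<le> Zp \<longleftrightarrow> Yp \<le> R1"
proof -
  have a: "(Yp-Zp)*(Yp-Zm) = f*((Yp-R0)*(Yp-R1))" using H[of Yp] by (simp add: algebra_simps)
  show ?thesis
  proof
    assume "Yp \<le> Zp"
    show "Yp \<le> R1"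
    proof (rule ccontr)
      assume "\<not> Yp \<le> R1"
      then have "(Yp-R0)*(Yp-R1) > 0" using r by (intro mult_pos_pos) auto
      then have "f*((Yp-R0)*(Yp-R1)) > 0" using f by simp
      moreover have "(Yp-Zp)*(Yp-Zm) \<le> 0" using `Yp \<le> Zp` o by (intro mult_nonpos_nonneg) auto
      ultimately show False using a by linarith
    qed
  next
    assume "Yp \<le> R1"
    have "f*((Yp-R0)*(Yp-R1)) \<le> 0" using f o `Yp \<le> R1` by (intro mult_nonneg_nonpos mult_nonneg_nonpos) auto
    show "Yp \<le> Zp"
    proof (rule ccontr)
      assume "\<not> Yp \<le> Zp"
      then have "(Yp-Zp)*(Yp-Zm) > 0" using o by (intro mult_pos_pos) auto
      then show False using a `f*((Yp-R0)*(Yp-R1)) \<le> 0` by linarith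
    qed
  qed
qed

lemma mid_case:
  fixes Zp Zm Yp Ym R0 R1 f :: real
  assumes f: "0 < f" "f < 1" and r: "R0 \<le> R1" and o: "Ym \<le> Zm" "Zm \<le> Yp" "Ym \<le> R0" "R0 \<le> Yp" "Zm \<le> Zp"
    and H: "\<And>x. (x-Zp)*(x-Zm) - (1-f)*(x-Yp)*(x-Ym) = f*(x-R0)*(x-R1)"
    and E: "(Zp + Zm) + (f - 1) * (Yp + Ym) = f * (R0 + R1)"
  shows "Zm \<le> R0 \<and> R0 \<le> Zp \<and> (Yp \<le> Zp \<longleftrightarrow> Yp \<le> R1) \<and> (Yp \<le> Zp \<longrightarrow> Zp \<le> R1) \<and> (Zp < Yp \<longrightarrow> R1 < Zp)"
proof -
  have P: "Yp \<le> Zp \<longleftrightarrow> Yp \<le> R1" using pos_common[OF f(1) r o H] by blast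
  have c: "(R0-Zp)*(R0-Zm) = (1-f)*((R0-Yp)*(R0-Ym))" using H[of R0] by (simp add: algebra_simps)
  have "(1-f)*((R0-Yp)*(R0-Ym)) \<le> 0" using f o by (intro mult_nonneg_nonpos mult_nonpos_nonneg) auto
  have 3: "Zm \<le> R0 \<and> R0 \<le> Zp"
  proof (rule ccontr)
    assume "\<not> (Zm \<le> R0 \<and> R0 \<le> Zp)"
    then have "(R0-Zp)*(R0-Zm) > 0" using o
      by (auto intro: mult_pos_pos mult_neg_neg)
    then show False using c `(1-f)*((R0-Yp)*(R0-Ym)) \<le> 0` by linarith
  qed
  have d: "-(1-f)*((Zp-Yp)*(Zp-Ym)) = f*((Zp-R0)*(Zp-R1))" using H[of Zp] by (simp add: algebra_simps)
  have C: "Yp \<le> Zp \<longrightarrow> Zp \<le> R1"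
  proof
    assume "Yp \<le> Zp"
    have "-(1-f)*((Zp-Yp)*(Zp-Ym)) \<le> 0" using f o `Yp \<le> Zp` by (simp only: minus_mult_left[symmetric] neg_le_0_iff_le) (intro mult_nonneg_nonneg; auto)
    show "Zp \<le> R1"
    proof (rule ccontr)
      assume "\<not> Zp \<le> R1"
      then have "(Zp-R0)*(Zp-R1) > 0" using r by (intro mult_pos_pos) auto
      then have "f*((Zp-R0)*(Zp-R1)) > 0" using f by simp
      then show False using d `-(1-f)*((Zp-Yp)*(Zp-Ym)) \<le> 0` by linarith
    qed
  qed
  have D: "Zp < Yp \<longrightarrow> R1 < Zp"
  proof
    assume "Zp < Yp"
    then have "R1 < Yp" using P by linarith
    have e: "(R1-Zp)*(R1-Zm) = (1-f)*((R1-Yp)*(R1-Ym))" using H[of R1] by (simp add: algebra_simps)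
    have "(1-f)*((R1-Yp)*(R1-Ym)) \<le> 0" using f o r `R1 < Yp` by (intro mult_nonneg_nonpos mult_nonpos_nonneg) auto
    have "R1 \<le> Zp"
    proof (rule ccontr)
      assume "\<not> R1 \<le> Zp"
      then have "(R1-Zp)*(R1-Zm) > 0" using o by (intro mult_pos_pos) auto
      then show False using e `(1-f)*((R1-Yp)*(R1-Ym)) \<le> 0` by linarith
    qed
    moreover have "R1 \<noteq> Zp"
    proof
      assume "R1 = Zp"
      then have "(1-f)*((R1-Yp)*(R1-Ym)) = 0" using e by simp
      then have "R1 = Ym" using f `R1 < Yp` by auto
      then have eqs: "Ym = R0" "R0 = R1" "Zm = Zp" "R1 = Zp" using o r 3 `R1 = Zp` by linarith+
      have "(f - 1) * (Yp - Zp) = 0" using E unfolding eqs(1) eqs(2) eqs(3) eqs(4)[symmetric] 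
        by (simp add: algebra_simps)
      then show False using f `Zp < Yp` by simp
    qed
    ultimately show "R1 < Zp" by simp
  qed
  show ?thesis using 3 P C D by blast
qed

lemma big_case:
  fixes Zp Zm Yp Ym R0 R1 f :: real
  assumes f: "1 < f" and r: "R0 \<le> R1" and o: "Ym \<le> Zm" "Zm \<le> Yp" "Ym \<le> R0" "R0 \<le> Yp" "Zm \<le> Zp"
    and H: "\<And>x. (x-Zp)*(x-Zm) - (1-f)*(x-Yp)*(x-Ym) = f*(x-R0)*(x-R1)"
    and E: "(Zp + Zm) + (f - 1) * (Yp + Ym) = f * (R0 + R1)"
  shows "R0 \<le> Zm \<and> (Yp \<le> Zp \<longleftrightarrow> Yp \<le> R1) \<and> (Yp \<le> Zp \<longrightarrow> Zm \<le> R1 \<and> R1 \<le> Zp) \<and> (Zp < Yp \<longrightarrow> Zp < R1)"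
proof -
  have f0: "0 < f" using f by simp
  have P: "Yp \<le> Zp \<longleftrightarrow> Yp \<le> R1" using pos_common[OF f0 r o H] by blast
  have c: "(R0-Zp)*(R0-Zm) = (1-f)*((R0-Yp)*(R0-Ym))" using H[of R0] by (simp add: algebra_simps)
  have "(1-f)*((R0-Yp)*(R0-Ym)) \<ge> 0" using f o by (intro mult_nonpos_nonpos mult_nonpos_nonneg) auto
  have g: "(f-1)*((Zm-Yp)*(Zm-Ym)) = f*((Zm-R0)*(Zm-R1))" using H[of Zm] by (simp add: algebra_simps)
  have A: "R0 \<le> Zm"
  proof (rule ccontr)
    assume "\<not> R0 \<le> Zm"
    then have "(Zm-R0)*(Zm-R1) > 0" using r by (intro mult_neg_neg) auto
    then have "f*((Zm-R0)*(Zm-R1)) > 0" using f by simp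
    moreover have "(f-1)*((Zm-Yp)*(Zm-Ym)) \<le> 0" using f o by (intro mult_nonneg_nonpos mult_nonpos_nonneg) auto
    ultimately show False using g by linarith
  qed
  have e: "(R1-Zp)*(R1-Zm) = (1-f)*((R1-Yp)*(R1-Ym))" using H[of R1] by (simp add: algebra_simps)
  have C: "Yp \<le> Zp \<longrightarrow> Zm \<le> R1 \<and> R1 \<le> Zp"
  proof
    assume "Yp \<le> Zp"
    then have "Yp \<le> R1" using P by simp
    then have "(1-f)*((R1-Yp)*(R1-Ym)) \<le> 0" using f o by (intro mult_nonpos_nonneg mult_nonneg_nonneg) auto
    show "Zm \<le> R1 \<and> R1 \<le> Zp"
    proof (rule ccontr)
      assume "\<not> (Zm \<le> R1 \<and> R1 \<le> Zp)"
      then have "(R1-Zp)*(R1-Zm) > 0" using o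
        by (auto intro: mult_pos_pos mult_neg_neg)
      then show False using e `(1-f)*((R1-Yp)*(R1-Ym)) \<le> 0` by linarith
    qed
  qed
  have d: "(f-1)*((Zp-Yp)*(Zp-Ym)) = f*((Zp-R0)*(Zp-R1))" using H[of Zp] by (simp add: algebra_simps)
  have D: "Zp < Yp \<longrightarrow> Zp < R1"
  proof
    assume "Zp < Yp"
    have "(f-1)*((Zp-Yp)*(Zp-Ym)) \<le> 0" using f o `Zp < Yp` by (intro mult_nonneg_nonpos mult_nonpos_nonneg) auto
    have "Zp \<le> R1"
    proof (rule ccontr)
      assume "\<not> Zp \<le> R1"
      then have "(Zp-R0)*(Zp-R1) > 0" using r by (intro mult_pos_pos) auto
      then have "f*((Zp-R0)*(Zp-R1)) > 0" using f by simp
      then show False using d `(f-1)*((Zp-Yp)*(Zp-Ym)) \<le> 0` by linarith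
    qed
    moreover have "Zp \<noteq> R1"
    proof
      assume "Zp = R1"
      then have "(f-1)*((Zp-Yp)*(Zp-Ym)) = 0" using d by simp
      then have "Zp = Ym" using f `Zp < Yp` by auto
      then have eqs: "Ym = R0" "R0 = R1" "Zm = Zp" "R1 = Zp" using o r A `Zp = R1` by linarith+
      have "(f - 1) * (Yp - Zp) = 0" using E unfolding eqs(1) eqs(2) eqs(3) eqs(4)[symmetric] 
        by (simp add: algebra_simps)
      then show False using f `Zp < Yp` by simp
    qed
    ultimately show "Zp < R1" by simp
  qed
  show ?thesis using A P C D by blast
qed

lemma zero_case:
  fixes Zp Zm Yp Ym R0 g :: real
  assumes g: "g \<le> 0" and o: "Ym \<le> Zm" "Zm \<le> Yp" "Ym \<le> R0" "R0 \<le> Yp" "Zm \<le> Zp" "Ym \<le> Yp"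
    and H: "\<And>x. (x-Zp)*(x-Zm) - (x-Yp)*(x-Ym) = g*(x-R0)"
  shows "(g = 0 \<longrightarrow> Yp = Zp \<and> Ym = Zm) \<and> (g < 0 \<longrightarrow> Yp \<le> Zp \<and> Zm \<le> R0 \<and> R0 \<le> Zp \<and> (Yp < Zp \<or> Ym < Zm))
     \<and> (Yp \<le> Zp \<and> Ym \<le> Zm \<and> (Yp < Zp \<or> Ym < Zm) \<longrightarrow> g < 0) \<and> (Yp = Zp \<and> Ym = Zm \<longrightarrow> g = 0)"
proof -
  have S: "(Zp + Zm) - (Yp + Ym) = - g" using H[of 0] H[of 1] by (simp add: algebra_simps)
  have Z: "g = 0 \<longrightarrow> Yp = Zp \<and> Ym = Zm"
  proof
    assume "g = 0"
    have "(Zp-Yp)*(Zp-Ym) = 0" using H[of Zp] `g = 0` by (simp add: algebra_simps)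
    then have "Zp = Yp \<or> Zp = Ym" by simp
    then show "Yp = Zp \<and> Ym = Zm" using S `g = 0` o by auto
  qed
  have N: "g < 0 \<longrightarrow> Yp \<le> Zp \<and> Zm \<le> R0 \<and> R0 \<le> Zp \<and> (Yp < Zp \<or> Ym < Zm)"
  proof
    assume "g < 0"
    have a: "(Yp-Zp)*(Yp-Zm) = g*(Yp-R0)" using H[of Yp] by (simp add: algebra_simps)
    have "g*(Yp-R0) \<le> 0" using `g < 0` o by (intro mult_nonpos_nonneg) auto
    have 1: "Yp \<le> Zp"
    proof (rule ccontr)
      assume "\<not> Yp \<le> Zp"
      then have "(Yp-Zp)*(Yp-Zm) > 0" using o by (intro mult_pos_pos) auto
      then show False using a `g*(Yp-R0) \<le> 0` by linarith
    qed
    have c: "(R0-Zp)*(R0-Zm) = (R0-Yp)*(R0-Ym)" using H[of R0] by (simp add: algebra_simps)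
    have "(R0-Yp)*(R0-Ym) \<le> 0" using o by (intro mult_nonpos_nonneg) auto
    have 3: "Zm \<le> R0 \<and> R0 \<le> Zp"
    proof (rule ccontr)
      assume "\<not> (Zm \<le> R0 \<and> R0 \<le> Zp)"
      then have "(R0-Zp)*(R0-Zm) > 0" using o
        by (auto intro: mult_pos_pos mult_neg_neg)
      then show False using c `(R0-Yp)*(R0-Ym) \<le> 0` by linarith
    qed
    show "Yp \<le> Zp \<and> Zm \<le> R0 \<and> R0 \<le> Zp \<and> (Yp < Zp \<or> Ym < Zm)" using 1 3 S `g < 0` o by auto
  qed
  show ?thesis using Z N S by auto
qed


lemma pR_zero_iff: "pR 0 f10 R0 R1 = (\<lambda>x. 0) \<longleftrightarrow> f10 = 0"
proof
  assume "pR 0 f10 R0 R1 = (\<lambda>x. 0)"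
  then have "pR 0 f10 R0 R1 (R0 + 1) = 0" by simp
  then show "f10 = 0" by (simp add: pR_def)
qed (simp add: pR_def fun_eq_iff)

lemma combine2:
  assumes "\<And>s. R s \<Longrightarrow> s = s1 \<or> s = s2" "A s1 \<and> B s1 \<and> C s1 \<and> D s1"
    "\<not> A s2 \<and> \<not> B s2 \<and> \<not> C s2 \<and> \<not> D s2" "R s1"
  shows "(\<exists>s. R s \<and> A s) \<and> (\<forall>s. R s \<longrightarrow> (A s \<longleftrightarrow> B s) \<and> (A s \<longleftrightarrow> C s) \<and> (A s \<longleftrightarrow> D s))"
  using assms by metis

lemma combine2b:
  assumes "\<And>s. R s \<Longrightarrow> s = s2 \<or> s = s1" "A s1 \<and> B s1 \<and> C s1 \<and> D s1"
    "\<not> A s2 \<and> \<not> B s2 \<and> \<not> C s2 \<and> \<not> D s2" "R s1"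
  shows "(\<exists>s. R s \<and> A s) \<and> (\<forall>s. R s \<longrightarrow> (A s \<longleftrightarrow> B s) \<and> (A s \<longleftrightarrow> C s) \<and> (A s \<longleftrightarrow> D s))"
  using assms by metis

lemma combine1:
  assumes "\<And>s. R s \<Longrightarrow> s = s1" "A s1 \<and> B s1 \<and> C s1 \<and> D s1" "R s1"
  shows "(\<exists>s. R s \<and> A s) \<and> (\<forall>s. R s \<longrightarrow> (A s \<longleftrightarrow> B s) \<and> (A s \<longleftrightarrow> C s) \<and> (A s \<longleftrightarrow> D s))"
  using assms by metis

theorem lemma6p7:
  fixes Zp Zm Yp Ym R0 R1 f20 f10 :: real
  assumes "f20 \<noteq> 1" and "Zm \<le> Zp" and "Ym \<le> Yp"
    and "f20 \<noteq> 0 \<Longrightarrow> 0 \<le> f20 * (R1 - R0)"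
    and "f20 = 0 \<Longrightarrow> 0 \<le> - f10"
  shows
    "((\<lambda>x. pZ Zp Zm x - pY f20 Yp Ym x) = pR f20 f10 R0 R1 \<longleftrightarrow>
        (Zp * Zm + (f20 - 1) * Yp * Ym = (if f20 \<noteq> 0 then f20 * R0 * R1 else - f10 * R0) \<and>
         (Zp + Zm) + (f20 - 1) * (Yp + Ym) = (if f20 \<noteq> 0 then f20 * (R0 + R1) else - f10)))
     \<and>
     ((\<lambda>x. pZ Zp Zm x - pY f20 Yp Ym x) = pR f20 f10 R0 R1 \<and>
      Ym \<le> Zm \<and> Zm \<le> Yp \<and> Ym \<le> R0 \<and> R0 \<le> Yp \<longrightarrow>
        (\<exists>s. scen_range s f20 \<and> cond_a s Zp Zm Yp Ym) \<and>
        (\<forall>s. scen_range s f20 \<longrightarrow>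
           (cond_a s Zp Zm Yp Ym \<longleftrightarrow> cond_b s f20 f10 Yp Ym R0 R1) \<and>
           (cond_a s Zp Zm Yp Ym \<longleftrightarrow> cond_c s f20 f10 Zp Zm R0 R1) \<and>
           (cond_a s Zp Zm Yp Ym \<longleftrightarrow> cond_d s f20 f10 Zp Zm Yp Ym R0 R1)))"
proof (intro conjI impI)
  show "((\<lambda>x. pZ Zp Zm x - pY f20 Yp Ym x) = pR f20 f10 R0 R1 \<longleftrightarrow>
        (Zp * Zm + (f20 - 1) * Yp * Ym = (if f20 \<noteq> 0 then f20 * R0 * R1 else - f10 * R0) \<and>
         (Zp + Zm) + (f20 - 1) * (Yp + Ym) = (if f20 \<noteq> 0 then f20 * (R0 + R1) else - f10)))"
    by (rule part1)
next
  assume A: "(\<lambda>x. pZ Zp Zm x - pY f20 Yp Ym x) = pR f20 f10 R0 R1 \<and>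
      Ym \<le> Zm \<and> Zm \<le> Yp \<and> Ym \<le> R0 \<and> R0 \<le> Yp"
  then have eq: "(\<lambda>x. pZ Zp Zm x - pY f20 Yp Ym x) = pR f20 f10 R0 R1"
    and o: "Ym \<le> Zm" "Zm \<le> Yp" "Ym \<le> R0" "R0 \<le> Yp" "Zm \<le> Zp" by (auto simp: assms)
  have Hg: "\<And>x. pZ Zp Zm x - pY f20 Yp Ym x = pR f20 f10 R0 R1 x" using eq by metis
  have co: "(Zp + Zm) + (f20 - 1) * (Yp + Ym) = (if f20 \<noteq> 0 then f20 * (R0 + R1) else - f10)"
    using part1[of Zp Zm f20 Yp Ym f10 R0 R1] eq by blast
  have "(\<exists>s. scen_range s f20 \<and> cond_a s Zp Zm Yp Ym) \<and>
        (\<forall>s. scen_range s f20 \<longrightarrow>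
           (cond_a s Zp Zm Yp Ym \<longleftrightarrow> cond_b s f20 f10 Yp Ym R0 R1) \<and>
           (cond_a s Zp Zm Yp Ym \<longleftrightarrow> cond_c s f20 f10 Zp Zm R0 R1) \<and>
           (cond_a s Zp Zm Yp Ym \<longleftrightarrow> cond_d s f20 f10 Zp Zm Yp Ym R0 R1))"
  proof (cases "f20 = 0")
    case True
    have H: "\<And>x. (x-Zp)*(x-Zm) - (x-Yp)*(x-Ym) = f10*(x-R0)"
      using Hg True by (simp add: pZ_def pY_def pR_def)
    have g: "f10 \<le> 0" using assms(5) True by simp
    have fz: "f20 = 0" using True .
    note Z = zero_case[OF g o assms(3) H]
    have rng: "scen_range s f20 \<Longrightarrow> s = S1a \<or> s = S1b" for s using True by (cases s) auto
    show ?thesis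
    proof (cases "f10 = 0")
      case f0: True
      have e: "Yp = Zp" "Ym = Zm" using Z f0 by auto
      have t: "cond_a S1a Zp Zm Yp Ym \<and> cond_b S1a f20 f10 Yp Ym R0 R1 \<and> cond_c S1a f20 f10 Zp Zm R0 R1 \<and> cond_d S1a f20 f10 Zp Zm Yp Ym R0 R1"
        using e f0 True by (simp add: pR_zero_iff)
      have n: "\<not> cond_a S1b Zp Zm Yp Ym \<and> \<not> cond_b S1b f20 f10 Yp Ym R0 R1 \<and> \<not> cond_c S1b f20 f10 Zp Zm R0 R1 \<and> \<not> cond_d S1b f20 f10 Zp Zm Yp Ym R0 R1"
        using e f0 by simp
      have sr: "scen_range S1a f20" using fz by simp
      show ?thesis by (rule combine2[where R="\<lambda>s. scen_range s f20" and A="\<lambda>s. cond_a s Zp Zm Yp Ym" and B="\<lambda>s. cond_b s f20 f10 Yp Ym R0 R1" and C="\<lambda>s. cond_c s f20 f10 Zp Zm R0 R1" and D="\<lambda>s. cond_d s f20 f10 Zp Zm Yp Ym R0 R1", OF rng t n sr])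
    next
      case f0: False
      have gl: "f10 < 0" using f0 g by simp
      have z: "Yp \<le> Zp" "Zm \<le> R0" "R0 \<le> Zp" "Yp < Zp \<or> Ym < Zm" using Z gl by auto
      have t: "cond_a S1b Zp Zm Yp Ym \<and> cond_b S1b f20 f10 Yp Ym R0 R1 \<and> cond_c S1b f20 f10 Zp Zm R0 R1 \<and> cond_d S1b f20 f10 Zp Zm Yp Ym R0 R1"
        using z gl o by simp
      have n: "\<not> cond_a S1a Zp Zm Yp Ym \<and> \<not> cond_b S1a f20 f10 Yp Ym R0 R1 \<and> \<not> cond_c S1a f20 f10 Zp Zm R0 R1 \<and> \<not> cond_d S1a f20 f10 Zp Zm Yp Ym R0 R1"
        using z(4) f0 True by (auto simp: pR_zero_iff)
      have sr: "scen_range S1b f20" using fz by simp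
      show ?thesis by (rule combine2b[where R="\<lambda>s. scen_range s f20" and A="\<lambda>s. cond_a s Zp Zm Yp Ym" and B="\<lambda>s. cond_b s f20 f10 Yp Ym R0 R1" and C="\<lambda>s. cond_c s f20 f10 Zp Zm R0 R1" and D="\<lambda>s. cond_d s f20 f10 Zp Zm Yp Ym R0 R1", OF rng t n sr])
    qed
  next
    case False
    have H: "\<And>x. (x-Zp)*(x-Zm) - (1-f20)*(x-Yp)*(x-Ym) = f20*(x-R0)*(x-R1)"
      using Hg False by (simp add: pZ_def pY_def pR_def)
    have E: "(Zp + Zm) + (f20 - 1) * (Yp + Ym) = f20 * (R0 + R1)" using co False by simp
    have fr: "0 \<le> f20 * (R1 - R0)" using assms(4) False by simp
    consider "f20 < 0" | "0 < f20" "f20 < 1" | "1 < f20" using False assms(1) by linarith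
    then show ?thesis
    proof cases
      case 1
      have r: "R1 \<le> R0" using fr 1 by (simp add: zero_le_mult_iff)
      have N: "Yp \<le> Zp" "R1 \<le> Ym" "Zm \<le> R0" "R0 \<le> Zp" using neg_case[OF 1 r o H] by auto
      have rng: "scen_range s f20 \<Longrightarrow> s = S2" for s using 1 by (cases s) auto
      have t: "cond_a S2 Zp Zm Yp Ym \<and> cond_b S2 f20 f10 Yp Ym R0 R1 \<and> cond_c S2 f20 f10 Zp Zm R0 R1 \<and> cond_d S2 f20 f10 Zp Zm Yp Ym R0 R1"
        unfolding cond_a.simps cond_b.simps cond_c.simps cond_d.simps using N o by (intro conjI; linarith)
      have sr: "scen_range S2 f20" using 1 by simp
      show ?thesis by (rule combine1[where R="\<lambda>s. scen_range s f20" and A="\<lambda>s. cond_a s Zp Zm Yp Ym" and B="\<lambda>s. cond_b s f20 f10 Yp Ym R0 R1" and C="\<lambda>s. cond_c s f20 f10 Zp Zm R0 R1" and D="\<lambda>s. cond_d s f20 f10 Zp Zm Yp Ym R0 R1", OF rng t sr])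
    next
      case 2
      have r: "R0 \<le> R1" using fr 2 by (simp add: zero_le_mult_iff)
      have M: "Zm \<le> R0" "R0 \<le> Zp" "Yp \<le> Zp \<longleftrightarrow> Yp \<le> R1" "Yp \<le> Zp \<longrightarrow> Zp \<le> R1" "Zp < Yp \<longrightarrow> R1 < Zp"
        using mid_case[OF 2 r o H E] by auto
      have rng: "scen_range s f20 \<Longrightarrow> s = S3a \<or> s = S4a" for s using 2 by (cases s) auto
      show ?thesis
      proof (cases "Yp \<le> Zp")
        case q: True
        have a: "Yp \<le> R1" "Zp \<le> R1" using M q by auto
        have t: "cond_a S3a Zp Zm Yp Ym \<and> cond_b S3a f20 f10 Yp Ym R0 R1 \<and> cond_c S3a f20 f10 Zp Zm R0 R1 \<and> cond_d S3a f20 f10 Zp Zm Yp Ym R0 R1"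
          unfolding cond_a.simps cond_b.simps cond_c.simps cond_d.simps using M(1,2) a q o by (intro conjI; linarith)
        have n: "\<not> cond_a S4a Zp Zm Yp Ym \<and> \<not> cond_b S4a f20 f10 Yp Ym R0 R1 \<and> \<not> cond_c S4a f20 f10 Zp Zm R0 R1 \<and> \<not> cond_d S4a f20 f10 Zp Zm Yp Ym R0 R1"
          unfolding cond_a.simps cond_b.simps cond_c.simps cond_d.simps using a q by auto
        have sr: "scen_range S3a f20" using 2 by simp
        show ?thesis by (rule combine2[where R="\<lambda>s. scen_range s f20" and A="\<lambda>s. cond_a s Zp Zm Yp Ym" and B="\<lambda>s. cond_b s f20 f10 Yp Ym R0 R1" and C="\<lambda>s. cond_c s f20 f10 Zp Zm R0 R1" and D="\<lambda>s. cond_d s f20 f10 Zp Zm Yp Ym R0 R1", OF rng t n sr])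
      next
        case q: False
        have a: "R1 < Yp" "R1 < Zp" using M q by auto
        have t: "cond_a S4a Zp Zm Yp Ym \<and> cond_b S4a f20 f10 Yp Ym R0 R1 \<and> cond_c S4a f20 f10 Zp Zm R0 R1 \<and> cond_d S4a f20 f10 Zp Zm Yp Ym R0 R1"
          unfolding cond_a.simps cond_b.simps cond_c.simps cond_d.simps using M(1,2) a q o r by (intro conjI; linarith)
        have n: "\<not> cond_a S3a Zp Zm Yp Ym \<and> \<not> cond_b S3a f20 f10 Yp Ym R0 R1 \<and> \<not> cond_c S3a f20 f10 Zp Zm R0 R1 \<and> \<not> cond_d S3a f20 f10 Zp Zm Yp Ym R0 R1"
          unfolding cond_a.simps cond_b.simps cond_c.simps cond_d.simps using a q by auto
        have sr: "scen_range S4a f20" using 2 by simp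
        show ?thesis by (rule combine2b[where R="\<lambda>s. scen_range s f20" and A="\<lambda>s. cond_a s Zp Zm Yp Ym" and B="\<lambda>s. cond_b s f20 f10 Yp Ym R0 R1" and C="\<lambda>s. cond_c s f20 f10 Zp Zm R0 R1" and D="\<lambda>s. cond_d s f20 f10 Zp Zm Yp Ym R0 R1", OF rng t n sr])
      qed
    next
      case 3
      have r: "R0 \<le> R1" using fr 3 by (simp add: zero_le_mult_iff)
      have B: "R0 \<le> Zm" "Yp \<le> Zp \<longleftrightarrow> Yp \<le> R1" "Yp \<le> Zp \<longrightarrow> Zm \<le> R1 \<and> R1 \<le> Zp" "Zp < Yp \<longrightarrow> Zp < R1"
        using big_case[OF 3 r o H E] by auto
      have rng: "scen_range s f20 \<Longrightarrow> s = S3b \<or> s = S4b" for s using 3 by (cases s) auto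
      show ?thesis
      proof (cases "Yp \<le> Zp")
        case q: True
        have a: "Yp \<le> R1" "Zm \<le> R1" "R1 \<le> Zp" using B q by auto
        have t: "cond_a S3b Zp Zm Yp Ym \<and> cond_b S3b f20 f10 Yp Ym R0 R1 \<and> cond_c S3b f20 f10 Zp Zm R0 R1 \<and> cond_d S3b f20 f10 Zp Zm Yp Ym R0 R1"
          unfolding cond_a.simps cond_b.simps cond_c.simps cond_d.simps using B(1) a q o by (intro conjI; linarith)
        have n: "\<not> cond_a S4b Zp Zm Yp Ym \<and> \<not> cond_b S4b f20 f10 Yp Ym R0 R1 \<and> \<not> cond_c S4b f20 f10 Zp Zm R0 R1 \<and> \<not> cond_d S4b f20 f10 Zp Zm Yp Ym R0 R1"
          unfolding cond_a.simps cond_b.simps cond_c.simps cond_d.simps using a q by auto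
        have sr: "scen_range S3b f20" using 3 by simp
        show ?thesis by (rule combine2[where R="\<lambda>s. scen_range s f20" and A="\<lambda>s. cond_a s Zp Zm Yp Ym" and B="\<lambda>s. cond_b s f20 f10 Yp Ym R0 R1" and C="\<lambda>s. cond_c s f20 f10 Zp Zm R0 R1" and D="\<lambda>s. cond_d s f20 f10 Zp Zm Yp Ym R0 R1", OF rng t n sr])
      next
        case q: False
        have a: "R1 < Yp" "Zp < R1" using B q by auto
        have t: "cond_a S4b Zp Zm Yp Ym \<and> cond_b S4b f20 f10 Yp Ym R0 R1 \<and> cond_c S4b f20 f10 Zp Zm R0 R1 \<and> cond_d S4b f20 f10 Zp Zm Yp Ym R0 R1"
          unfolding cond_a.simps cond_b.simps cond_c.simps cond_d.simps using B(1) a q o r by (intro conjI; linarith)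
        have n: "\<not> cond_a S3b Zp Zm Yp Ym \<and> \<not> cond_b S3b f20 f10 Yp Ym R0 R1 \<and> \<not> cond_c S3b f20 f10 Zp Zm R0 R1 \<and> \<not> cond_d S3b f20 f10 Zp Zm Yp Ym R0 R1"
          unfolding cond_a.simps cond_b.simps cond_c.simps cond_d.simps using a q by auto
        have sr: "scen_range S4b f20" using 3 by simp
        show ?thesis by (rule combine2b[where R="\<lambda>s. scen_range s f20" and A="\<lambda>s. cond_a s Zp Zm Yp Ym" and B="\<lambda>s. cond_b s f20 f10 Yp Ym R0 R1" and C="\<lambda>s. cond_c s f20 f10 Zp Zm R0 R1" and D="\<lambda>s. cond_d s f20 f10 Zp Zm Yp Ym R0 R1", OF rng t n sr])
      qed
    qed
  qed
  then show "\<exists>s. scen_range s f20 \<and> cond_a s Zp Zm Yp Ym" by blast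
  show "\<forall>s. scen_range s f20 \<longrightarrow>
           (cond_a s Zp Zm Yp Ym \<longleftrightarrow> cond_b s f20 f10 Yp Ym R0 R1) \<and>
           (cond_a s Zp Zm Yp Ym \<longleftrightarrow> cond_c s f20 f10 Zp Zm R0 R1) \<and>
           (cond_a s Zp Zm Yp Ym \<longleftrightarrow> cond_d s f20 f10 Zp Zm Yp Ym R0 R1)"
    using `(\<exists>s. _) \<and> _` by blast
qed

end
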